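(* Let $(\mathcal{A},P,\Theta)$ be a combinatorial proto-exact category with duality (admitting finite coproducts, $P$ additive). Let $M_1,M_2$ be symmetric forms in $\mathcal{A}$ and let $i:U\rightarrowtail M_1\oplus M_2$ be isotropic. Then $i$ factors through isotropic inflations $i_k:U_k\rightarrowtail M_k$, $k=1,2$; that is, there is an isomorphism $f:U\to U_1\oplus U_2$ with $(i_1\oplus i_2)\circ f=i$.
   Context: Proto-exact category: pointed category with inflations $\rightarrowtail$ and deflations $\twoheadrightarrow$ (containing isomorphisms, closed under composition, $0\to U$ inflations, $U\to0$ deflations) such that squares with horizontal inflations and vertical deflations are pullbacks iff pushouts, and cospans $W\rightarrowtail X\twoheadleftarrow V$ and spans $W\twoheadleftarrow U\rightarrowtail V$ complete to such biCartesian squares. Duality: functor $P:\mathcal{A}^{op}\to\mathcal{A}$, natural iso $\Theta:\mathrm{id}\Rightarrow PP^{op}$, $P(\Theta_U)\Theta_{P(U)}=\mathrm{id}$; $P$ exact ($P(0)\simeq0$, $\phi$ inflation iff $P(\phi)$ deflation, biCartesian squares preserved and reflected). Symmetric form $(M,\psi_M)$: iso $\psi_M:M\to P(M)$ with $P(\psi_M)\Theta_M=\psi_M$; $(M_1,\psi_1)\oplus(M_2,\psi_2)=(M_1\oplus M_2,\psi_1\oplus\psi_2)$. An inflation $j:U\rightarrowtail M$ is isotropic if $P(j)\psi_Mj=0$ and the induced monomorphism $U\to U^\perp$ is an inflation, where $U^\perp$ is a kernel of $P(j)\psi_M$. $\mathcal{A}$ is combinatorial if it has finite coproducts and for each inflation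 $j:U\rightarrowtail X_1\oplus X_2$ there exist inflations $j_k:U_k\rightarrowtail X_k$ and an isomorphism $f:U\to U_1\oplus U_2$ with $(j_1\oplus j_2)f=j$. *)

theory Defs
  imports Main
begin

text \<open>Composition is written cmp C g f for g after f.\<close>

record ('o, 'm) pecd =
  cdom  :: "'m \<Rightarrow> 'o"
  ccod  :: "'m \<Rightarrow> 'o"
  cmp   :: "'m \<Rightarrow> 'm \<Rightarrow> 'm"
  idt   :: "'o \<Rightarrow> 'm"
  zobj  :: "'o"
  infl  :: "'m \<Rightarrow> bool"
  defl  :: "'m \<Rightarrow> bool"
  cop   :: "'o \<Rightarrow> 'o \<Rightarrow> 'o"
  inj1  :: "'o \<Rightarrow> 'o \<Rightarrow> 'm"
  inj2  :: "'o \<Rightarrow> 'o \<Rightarrow> 'm"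
  Pob   :: "'o \<Rightarrow> 'o"
  Pmor  :: "'m \<Rightarrow> 'm"
  Theta :: "'o \<Rightarrow> 'm"

definition hom :: "('o,'m) pecd \<Rightarrow> 'm \<Rightarrow> 'o \<Rightarrow> 'o \<Rightarrow> bool" where
  "hom C f X Y \<longleftrightarrow> cdom C f = X \<and> ccod C f = Y"

definition is_category :: "('o,'m) pecd \<Rightarrow> bool" where
  "is_category C \<longleftrightarrow>
     (\<forall>X. hom C (idt C X) X X) \<and>
     (\<forall>f g. ccod C f = cdom C g \<longrightarrow> hom C (cmp C g f) (cdom C f) (ccod C g)) \<and>
     (\<forall>f. cmp C f (idt C (cdom C f)) = f \<and> cmp C (idt C (ccod C f)) f = f) \<and>
     (\<forall>f g h. ccod C f = cdom C g \<longrightarrow> ccod C g = cdom C h \<longrightarrow>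
         cmp C h (cmp C g f) = cmp C (cmp C h g) f)"

definition iso :: "('o,'m) pecd \<Rightarrow> 'm \<Rightarrow> bool" where
  "iso C f \<longleftrightarrow> (\<exists>g. hom C g (ccod C f) (cdom C f) \<and>
      cmp C g f = idt C (cdom C f) \<and> cmp C f g = idt C (ccod C f))"

definition zero_object :: "('o,'m) pecd \<Rightarrow> 'o \<Rightarrow> bool" where
  "zero_object C z \<longleftrightarrow> (\<forall>X. (\<exists>!f. hom C f z X) \<and> (\<exists>!f. hom C f X z))"

definition zero_mor :: "('o,'m) pecd \<Rightarrow> 'm \<Rightarrow> bool" where
  "zero_mor C f \<longleftrightarrow> (\<exists>a b. hom C a (cdom C f) (zobj C) \<and> hom C b (zobj C) (ccod C f)
      \<and> f = cmp C b a)"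

definition zero_hom :: "('o,'m) pecd \<Rightarrow> 'o \<Rightarrow> 'o \<Rightarrow> 'm" where
  "zero_hom C X Y = cmp C (THE b. hom C b (zobj C) Y) (THE a. hom C a X (zobj C))"

text \<open>Commutative square
     U --i--> V
     |d       |d'
     W --i'-> X \<close>
definition comm_sq :: "('o,'m) pecd \<Rightarrow> 'm \<Rightarrow> 'm \<Rightarrow> 'm \<Rightarrow> 'm \<Rightarrow> bool" where
  "comm_sq C i d d' i' \<longleftrightarrow> cdom C d = cdom C i \<and> ccod C i = cdom C d' \<and>
     ccod C d = cdom C i' \<and> ccod C d' = ccod C i' \<and> cmp C d' i = cmp C i' d"

definition pullback :: "('o,'m) pecd \<Rightarrow> 'm \<Rightarrow> 'm \<Rightarrow> 'm \<Rightarrow> 'm \<Rightarrow> bool" where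
  "pullback C i d d' i' \<longleftrightarrow> comm_sq C i d d' i' \<and>
     (\<forall>a b. cdom C a = cdom C b \<and> ccod C a = cdom C i' \<and> ccod C b = cdom C d' \<and>
        cmp C i' a = cmp C d' b \<longrightarrow>
        (\<exists>!t. hom C t (cdom C a) (cdom C i) \<and> cmp C d t = a \<and> cmp C i t = b))"

definition pushout :: "('o,'m) pecd \<Rightarrow> 'm \<Rightarrow> 'm \<Rightarrow> 'm \<Rightarrow> 'm \<Rightarrow> bool" where
  "pushout C i d d' i' \<longleftrightarrow> comm_sq C i d d' i' \<and>
     (\<forall>a b. ccod C a = ccod C b \<and> cdom C a = ccod C i \<and> cdom C b = ccod C d \<and>
        cmp C a i = cmp C b d \<longrightarrow>
        (\<exists>!t. hom C t (ccod C i') (ccod C a) \<and> cmp C t d' = a \<and> cmp C t i' = b))"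

definition bicart :: "('o,'m) pecd \<Rightarrow> 'm \<Rightarrow> 'm \<Rightarrow> 'm \<Rightarrow> 'm \<Rightarrow> bool" where
  "bicart C i d d' i' \<longleftrightarrow> pullback C i d d' i' \<and> pushout C i d d' i'"

definition adm_sq :: "('o,'m) pecd \<Rightarrow> 'm \<Rightarrow> 'm \<Rightarrow> 'm \<Rightarrow> 'm \<Rightarrow> bool" where
  "adm_sq C i d d' i' \<longleftrightarrow> comm_sq C i d d' i' \<and> infl C i \<and> infl C i' \<and> defl C d \<and> defl C d'"

definition proto_exact :: "('o,'m) pecd \<Rightarrow> bool" where
  "proto_exact C \<longleftrightarrow> is_category C \<and> zero_object C (zobj C) \<and>
     (\<forall>f. iso C f \<longrightarrow> infl C f \<and> defl C f) \<and>
     (\<forall>f g. ccod C f = cdom C g \<longrightarrow> infl C f \<longrightarrow> infl C g \<longrightarrow> infl C (cmp C g f)) \<and>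
     (\<forall>f g. ccod C f = cdom C g \<longrightarrow> defl C f \<longrightarrow> defl C g \<longrightarrow> defl C (cmp C g f)) \<and>
     (\<forall>X f. hom C f (zobj C) X \<longrightarrow> infl C f) \<and>
     (\<forall>X f. hom C f X (zobj C) \<longrightarrow> defl C f) \<and>
     (\<forall>i d d' i'. adm_sq C i d d' i' \<longrightarrow> (pullback C i d d' i' \<longleftrightarrow> pushout C i d d' i')) \<and>
     (\<forall>d' i'. infl C i' \<and> defl C d' \<and> ccod C i' = ccod C d' \<longrightarrow>
        (\<exists>i d. adm_sq C i d d' i' \<and> bicart C i d d' i')) \<and>
     (\<forall>i d. infl C i \<and> defl C d \<and> cdom C i = cdom C d \<longrightarrow>
        (\<exists>d' i'. adm_sq C i d d' i' \<and> bicart C i d d' i'))"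

definition exact_duality :: "('o,'m) pecd \<Rightarrow> bool" where
  "exact_duality C \<longleftrightarrow>
     (\<forall>X. Pmor C (idt C X) = idt C (Pob C X)) \<and>
     (\<forall>f. hom C (Pmor C f) (Pob C (ccod C f)) (Pob C (cdom C f))) \<and>
     (\<forall>f g. ccod C f = cdom C g \<longrightarrow> Pmor C (cmp C g f) = cmp C (Pmor C f) (Pmor C g)) \<and>
     (\<forall>U. hom C (Theta C U) U (Pob C (Pob C U)) \<and> iso C (Theta C U)) \<and>
     (\<forall>f. cmp C (Theta C (ccod C f)) f = cmp C (Pmor C (Pmor C f)) (Theta C (cdom C f))) \<and>
     (\<forall>U. cmp C (Pmor C (Theta C U)) (Theta C (Pob C U)) = idt C (Pob C U)) \<and>
     (\<exists>f. hom C f (Pob C (zobj C)) (zobj C) \<and> iso C f) \<and>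
     (\<forall>\<phi>. infl C \<phi> \<longleftrightarrow> defl C (Pmor C \<phi>)) \<and>
     (\<forall>i d d' i'. adm_sq C i d d' i' \<longrightarrow>
        (bicart C i d d' i' \<longleftrightarrow> bicart C (Pmor C d') (Pmor C i') (Pmor C i) (Pmor C d)))"

text \<open>Chosen binary coproducts (with the zero object this gives all finite coproducts).\<close>
definition has_coproducts :: "('o,'m) pecd \<Rightarrow> bool" where
  "has_coproducts C \<longleftrightarrow> (\<forall>X Y. hom C (inj1 C X Y) X (cop C X Y) \<and> hom C (inj2 C X Y) Y (cop C X Y) \<and>
     (\<forall>a b. cdom C a = X \<and> cdom C b = Y \<and> ccod C a = ccod C b \<longrightarrow>
        (\<exists>!h. hom C h (cop C X Y) (ccod C a) \<and> cmp C h (inj1 C X Y) = a \<and> cmp C h (inj2 C X Y) = b)))"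

definition copair :: "('o,'m) pecd \<Rightarrow> 'm \<Rightarrow> 'm \<Rightarrow> 'm" where
  "copair C a b = (THE h. hom C h (cop C (cdom C a) (cdom C b)) (ccod C a) \<and>
      cmp C h (inj1 C (cdom C a) (cdom C b)) = a \<and> cmp C h (inj2 C (cdom C a) (cdom C b)) = b)"

definition dsum :: "('o,'m) pecd \<Rightarrow> 'm \<Rightarrow> 'm \<Rightarrow> 'm" where
  "dsum C f g = copair C (cmp C (inj1 C (ccod C f) (ccod C g)) f) (cmp C (inj2 C (ccod C f) (ccod C g)) g)"

definition proj1 :: "('o,'m) pecd \<Rightarrow> 'o \<Rightarrow> 'o \<Rightarrow> 'm" where
  "proj1 C X Y = copair C (idt C X) (zero_hom C Y X)"

definition proj2 :: "('o,'m) pecd \<Rightarrow> 'o \<Rightarrow> 'o \<Rightarrow> 'm" where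
  "proj2 C X Y = copair C (zero_hom C X Y) (idt C Y)"

definition can :: "('o,'m) pecd \<Rightarrow> 'o \<Rightarrow> 'o \<Rightarrow> 'm" where
  "can C X Y = copair C (Pmor C (proj1 C X Y)) (Pmor C (proj2 C X Y))"

definition additive_duality :: "('o,'m) pecd \<Rightarrow> bool" where
  "additive_duality C \<longleftrightarrow> (\<forall>X Y. iso C (can C X Y))"

definition combinatorial :: "('o,'m) pecd \<Rightarrow> bool" where
  "combinatorial C \<longleftrightarrow> has_coproducts C \<and>
     (\<forall>j X1 X2. infl C j \<and> ccod C j = cop C X1 X2 \<longrightarrow>
        (\<exists>j1 j2 f. infl C j1 \<and> infl C j2 \<and> ccod C j1 = X1 \<and> ccod C j2 = X2 \<and>
           hom C f (cdom C j) (cop C (cdom C j1) (cdom C j2)) \<and> iso C f \<and>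
           cmp C (dsum C j1 j2) f = j))"

definition sym_form :: "('o,'m) pecd \<Rightarrow> 'o \<Rightarrow> 'm \<Rightarrow> bool" where
  "sym_form C M \<psi> \<longleftrightarrow> hom C \<psi> M (Pob C M) \<and> iso C \<psi> \<and> cmp C (Pmor C \<psi>) (Theta C M) = \<psi>"

text \<open>Orthogonal sum of forms, P(M1 \<oplus> M2) identified with P M1 \<oplus> P M2 via can.\<close>
definition sum_form :: "('o,'m) pecd \<Rightarrow> 'o \<Rightarrow> 'o \<Rightarrow> 'm \<Rightarrow> 'm \<Rightarrow> 'm" where
  "sum_form C M1 M2 \<psi>1 \<psi>2 = cmp C (can C M1 M2) (dsum C \<psi>1 \<psi>2)"

definition is_kernel :: "('o,'m) pecd \<Rightarrow> 'm \<Rightarrow> 'm \<Rightarrow> bool" where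
  "is_kernel C h k \<longleftrightarrow> ccod C k = cdom C h \<and> zero_mor C (cmp C h k) \<and>
     (\<forall>g. ccod C g = cdom C h \<and> zero_mor C (cmp C h g) \<longrightarrow>
        (\<exists>!t. hom C t (cdom C g) (cdom C k) \<and> cmp C k t = g))"

definition isotropic :: "('o,'m) pecd \<Rightarrow> 'o \<Rightarrow> 'm \<Rightarrow> 'm \<Rightarrow> bool" where
  "isotropic C M \<psi> j \<longleftrightarrow> infl C j \<and> ccod C j = M \<and>
     zero_mor C (cmp C (Pmor C j) (cmp C \<psi> j)) \<and>
     (\<exists>k u. is_kernel C (cmp C (Pmor C j) \<psi>) k \<and> hom C u (cdom C j) (cdom C k) \<and>
        cmp C k u = j \<and> infl C u)"

end

theory Submission
  imports Defs
begin

locale pctx =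
  fixes C :: "('o,'m) pecd"
  assumes pe: "proto_exact C" and ed: "exact_duality C" and hc: "has_coproducts C"
    and cb: "combinatorial C"
begin

abbreviation cc (infixl "\<cdot>" 80) where "g \<cdot> f \<equiv> cmp C g f"
abbreviation "dm \<equiv> cdom C"
abbreviation "cd \<equiv> ccod C"
abbreviation "z \<equiv> zobj C"

lemma cat: "is_category C" using pe proto_exact_def by blast

lemma dom_comp[simp]: "cd f = dm g \<Longrightarrow> dm (g \<cdot> f) = dm f"
  using cat unfolding is_category_def hom_def by blast
lemma cod_comp[simp]: "cd f = dm g \<Longrightarrow> cd (g \<cdot> f) = cd g"
  using cat unfolding is_category_def hom_def by blast
lemma assoc[simp]: "cd f = dm g \<Longrightarrow> cd g = dm h \<Longrightarrow> h \<cdot> (g \<cdot> f) = h \<cdot> g \<cdot> f"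
  using cat unfolding is_category_def by blast
lemma dom_id[simp]: "dm (idt C X) = X" and cod_id[simp]: "cd (idt C X) = X"
  using cat unfolding is_category_def hom_def by blast+
lemma id_r[simp]: "dm f = X \<Longrightarrow> f \<cdot> idt C X = f"
  using cat unfolding is_category_def by blast
lemma id_l[simp]: "cd f = X \<Longrightarrow> idt C X \<cdot> f = f"
  using cat unfolding is_category_def by blast

lemma pre: "a \<cdot> b = c \<Longrightarrow> cd b = dm a \<Longrightarrow> cd a = dm x \<Longrightarrow> x \<cdot> a \<cdot> b = x \<cdot> c"
  by (metis assoc)

lemma zo: "zero_object C z" using pe proto_exact_def by blast

lemma to_z_unique: "cd a = z \<Longrightarrow> cd b = z \<Longrightarrow> dm a = dm b \<Longrightarrow> a = b"
  using zo unfolding zero_object_def hom_def by metis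
lemma from_z_unique: "dm a = z \<Longrightarrow> dm b = z \<Longrightarrow> cd a = cd b \<Longrightarrow> a = b"
  using zo unfolding zero_object_def hom_def by metis

definition "toz X = (THE a. hom C a X z)"
definition "fromz Y = (THE b. hom C b z Y)"

lemma toz: "dm (toz X) = X" "cd (toz X) = z"
proof -
  have "\<exists>!a. hom C a X z" using zo unfolding zero_object_def by blast
  from theI'[OF this] have "hom C (toz X) X z" unfolding toz_def .
  then show "dm (toz X) = X" "cd (toz X) = z" unfolding hom_def by simp_all
qed
lemma fromz: "dm (fromz Y) = z" "cd (fromz Y) = Y"
proof -
  have "\<exists>!a. hom C a z Y" using zo unfolding zero_object_def by blast
  from theI'[OF this] have "hom C (fromz Y) z Y" unfolding fromz_def .
  then show "dm (fromz Y) = z" "cd (fromz Y) = Y" unfolding hom_def by simp_all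
qed

lemma zero_hom_eq: "zero_hom C X Y = fromz Y \<cdot> toz X"
  unfolding zero_hom_def toz_def fromz_def ..

lemma zh_dom[simp]: "dm (zero_hom C X Y) = X" and zh_cod[simp]: "cd (zero_hom C X Y) = Y"
  unfolding zero_hom_eq using toz fromz by simp_all

lemma zero_mor_iff: "zero_mor C f \<longleftrightarrow> f = zero_hom C (dm f) (cd f)"
proof
  assume "zero_mor C f"
  then obtain a b where ab: "hom C a (dm f) z" "hom C b z (cd f)" "f = b \<cdot> a"
    unfolding zero_mor_def by (elim exE conjE) (rule that)
  have "a = toz (dm f)" using ab(1) toz unfolding hom_def by (intro to_z_unique) simp_all
  moreover have "b = fromz (cd f)" using ab(2) fromz unfolding hom_def by (intro from_z_unique) simp_all
  ultimately have ba: "b \<cdot> a = zero_hom C (dm f) (cd f)" by (simp add: zero_hom_eq)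
  show "f = zero_hom C (dm f) (cd f)" by (rule trans[OF ab(3) ba])
next
  assume e: "f = zero_hom C (dm f) (cd f)"
  have "f = fromz (cd f) \<cdot> toz (dm f)" unfolding zero_hom_eq[symmetric] by (rule e)
  then have "hom C (toz (dm f)) (dm f) z \<and> hom C (fromz (cd f)) z (cd f) \<and> f = fromz (cd f) \<cdot> toz (dm f)"
    using toz fromz unfolding hom_def by simp
  then show "zero_mor C f" unfolding zero_mor_def by blast
qed

lemma zh_comp_r: "dm f = X \<Longrightarrow> cd f = Y \<Longrightarrow> zero_hom C Y Z \<cdot> f = zero_hom C X Z"
proof -
  assume f: "dm f = X" "cd f = Y"
  have "toz Y \<cdot> f = toz X" using f toz by (intro to_z_unique) auto
  then show ?thesis unfolding zero_hom_eq using f toz fromz by (metis assoc)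
qed
lemma zh_comp_l: "dm g = Y \<Longrightarrow> cd g = Z \<Longrightarrow> g \<cdot> zero_hom C X Y = zero_hom C X Z"
proof -
  assume g: "dm g = Y" "cd g = Z"
  have "g \<cdot> fromz Y = fromz Z" using g fromz by (intro from_z_unique) auto
  then show ?thesis unfolding zero_hom_eq using g toz fromz by (metis assoc)
qed

lemma zm_comp_l: "zero_mor C f \<Longrightarrow> cd f = dm g \<Longrightarrow> zero_mor C (g \<cdot> f)"
  by (metis zero_mor_iff zh_comp_l dom_comp cod_comp zh_cod zh_dom)
lemma zm_comp_r: "zero_mor C f \<Longrightarrow> cd g = dm f \<Longrightarrow> zero_mor C (f \<cdot> g)"
  by (metis zero_mor_iff zh_comp_r dom_comp cod_comp zh_cod zh_dom)


lemma inj_typ[simp]: "dm (inj1 C X Y) = X" "cd (inj1 C X Y) = cop C X Y"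
   "dm (inj2 C X Y) = Y" "cd (inj2 C X Y) = cop C X Y"
  using hc unfolding has_coproducts_def hom_def by blast+

lemma copair_props:
  assumes "cd a = cd b"
  shows "dm (copair C a b) = cop C (dm a) (dm b) \<and> cd (copair C a b) = cd a \<and>
    copair C a b \<cdot> inj1 C (dm a) (dm b) = a \<and> copair C a b \<cdot> inj2 C (dm a) (dm b) = b"
proof -
  have "\<exists>!h. hom C h (cop C (dm a) (dm b)) (cd a) \<and> h \<cdot> inj1 C (dm a) (dm b) = a \<and> h \<cdot> inj2 C (dm a) (dm b) = b"
    using hc assms unfolding has_coproducts_def by blast
  from theI'[OF this] show ?thesis unfolding copair_def hom_def by blast
qed

lemma copair_dom[simp]: "cd a = cd b \<Longrightarrow> dm (copair C a b) = cop C (dm a) (dm b)"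
  and copair_cod[simp]: "cd a = cd b \<Longrightarrow> cd (copair C a b) = cd a"
  using copair_props by blast+
lemma copair_inj1[simp]: "cd a = cd b \<Longrightarrow> dm a = X \<Longrightarrow> dm b = Y \<Longrightarrow> copair C a b \<cdot> inj1 C X Y = a"
  using copair_props by blast
lemma copair_inj2[simp]: "cd a = cd b \<Longrightarrow> dm a = X \<Longrightarrow> dm b = Y \<Longrightarrow> copair C a b \<cdot> inj2 C X Y = b"
  using copair_props by blast
lemmas copair_inj_pre[simp] = pre[OF copair_inj1] pre[OF copair_inj2]

lemma cop_ext:
  assumes "dm h = cop C X Y" "dm h' = cop C X Y" "cd h = cd h'"
    "h \<cdot> inj1 C X Y = h' \<cdot> inj1 C X Y" "h \<cdot> inj2 C X Y = h' \<cdot> inj2 C X Y"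
  shows "h = h'"
proof -
  let ?a = "h \<cdot> inj1 C X Y" and ?b = "h \<cdot> inj2 C X Y"
  have all: "\<forall>a b. dm a = X \<and> dm b = Y \<and> cd a = cd b \<longrightarrow>
        (\<exists>!t. hom C t (cop C X Y) (cd a) \<and> t \<cdot> inj1 C X Y = a \<and> t \<cdot> inj2 C X Y = b)"
    using hc unfolding has_coproducts_def by blast
  have "dm ?a = X \<and> dm ?b = Y \<and> cd ?a = cd ?b" using assms by simp
  with all have "\<exists>!t. hom C t (cop C X Y) (cd ?a) \<and> t \<cdot> inj1 C X Y = ?a \<and> t \<cdot> inj2 C X Y = ?b"
    by blast
  moreover have "hom C h (cop C X Y) (cd ?a) \<and> h \<cdot> inj1 C X Y = ?a \<and> h \<cdot> inj2 C X Y = ?b"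
    using assms unfolding hom_def by simp
  moreover have "hom C h' (cop C X Y) (cd ?a) \<and> h' \<cdot> inj1 C X Y = ?a \<and> h' \<cdot> inj2 C X Y = ?b"
    using assms unfolding hom_def by simp
  ultimately show ?thesis by blast
qed

lemma dsum_typ[simp]: "dm (dsum C f g) = cop C (dm f) (dm g)" "cd (dsum C f g) = cop C (cd f) (cd g)"
  unfolding dsum_def by simp_all

lemma dsum_inj1[simp]: "dm f = X \<Longrightarrow> dm g = Y \<Longrightarrow> dsum C f g \<cdot> inj1 C X Y = inj1 C (cd f) (cd g) \<cdot> f"
  unfolding dsum_def by simp
lemma dsum_inj2[simp]: "dm f = X \<Longrightarrow> dm g = Y \<Longrightarrow> dsum C f g \<cdot> inj2 C X Y = inj2 C (cd f) (cd g) \<cdot> g"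
  unfolding dsum_def by simp

lemmas dsum_inj_pre[simp] = pre[OF dsum_inj1] pre[OF dsum_inj2]

lemma dsum_comp:
  assumes "cd v1 = dm k1" "cd v2 = dm k2"
  shows "dsum C (k1 \<cdot> v1) (k2 \<cdot> v2) = dsum C k1 k2 \<cdot> dsum C v1 v2"
proof (rule cop_ext[of _ "dm v1" "dm v2"])
  have "dsum C k1 k2 \<cdot> dsum C v1 v2 \<cdot> inj1 C (dm v1) (dm v2) = dsum C k1 k2 \<cdot> (dsum C v1 v2 \<cdot> inj1 C (dm v1) (dm v2))"
    using assms by simp
  also have "\<dots> = inj1 C (cd k1) (cd k2) \<cdot> (k1 \<cdot> v1)" using assms by simp
  finally show "dsum C (k1 \<cdot> v1) (k2 \<cdot> v2) \<cdot> inj1 C (dm v1) (dm v2) = dsum C k1 k2 \<cdot> dsum C v1 v2 \<cdot> inj1 C (dm v1) (dm v2)"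
    using assms by simp
  have "dsum C k1 k2 \<cdot> dsum C v1 v2 \<cdot> inj2 C (dm v1) (dm v2) = dsum C k1 k2 \<cdot> (dsum C v1 v2 \<cdot> inj2 C (dm v1) (dm v2))"
    using assms by simp
  also have "\<dots> = inj2 C (cd k1) (cd k2) \<cdot> (k2 \<cdot> v2)" using assms by simp
  finally show "dsum C (k1 \<cdot> v1) (k2 \<cdot> v2) \<cdot> inj2 C (dm v1) (dm v2) = dsum C k1 k2 \<cdot> dsum C v1 v2 \<cdot> inj2 C (dm v1) (dm v2)"
    using assms by simp
qed (use assms in simp_all)

lemma dsum_id: "dsum C (idt C X) (idt C Y) = idt C (cop C X Y)"
  by (rule cop_ext[of _ X Y]) simp_all

lemma proj_typ[simp]: "dm (proj1 C X Y) = cop C X Y" "cd (proj1 C X Y) = X"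
  "dm (proj2 C X Y) = cop C X Y" "cd (proj2 C X Y) = Y"
  unfolding proj1_def proj2_def by simp_all

lemma proj_inj[simp]: "proj1 C X Y \<cdot> inj1 C X Y = idt C X" "proj1 C X Y \<cdot> inj2 C X Y = zero_hom C Y X"
  "proj2 C X Y \<cdot> inj2 C X Y = idt C Y" "proj2 C X Y \<cdot> inj1 C X Y = zero_hom C X Y"
  unfolding proj1_def proj2_def by simp_all

lemmas proj_inj_pre[simp] = pre[OF proj_inj(1)] pre[OF proj_inj(2)] pre[OF proj_inj(3)] pre[OF proj_inj(4)]

lemma proj1_dsum: "proj1 C (cd a) (cd b) \<cdot> dsum C a b = a \<cdot> proj1 C (dm a) (dm b)"
proof (rule cop_ext[of _ "dm a" "dm b"])
  have "proj1 C (cd a) (cd b) \<cdot> dsum C a b \<cdot> inj1 C (dm a) (dm b) = proj1 C (cd a) (cd b) \<cdot> (dsum C a b \<cdot> inj1 C (dm a) (dm b))"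
    by simp
  also have "\<dots> = a" by simp
  also have "\<dots> = a \<cdot> (proj1 C (dm a) (dm b) \<cdot> inj1 C (dm a) (dm b))" by simp
  finally show "proj1 C (cd a) (cd b) \<cdot> dsum C a b \<cdot> inj1 C (dm a) (dm b) = a \<cdot> proj1 C (dm a) (dm b) \<cdot> inj1 C (dm a) (dm b)"
    by simp
  have "proj1 C (cd a) (cd b) \<cdot> dsum C a b \<cdot> inj2 C (dm a) (dm b) = proj1 C (cd a) (cd b) \<cdot> (dsum C a b \<cdot> inj2 C (dm a) (dm b))"
    by simp
  also have "\<dots> = zero_hom C (dm b) (cd a)" by (simp add: zh_comp_r)
  also have "\<dots> = a \<cdot> (proj1 C (dm a) (dm b) \<cdot> inj2 C (dm a) (dm b))" by (simp add: zh_comp_l)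
  finally show "proj1 C (cd a) (cd b) \<cdot> dsum C a b \<cdot> inj2 C (dm a) (dm b) = a \<cdot> proj1 C (dm a) (dm b) \<cdot> inj2 C (dm a) (dm b)"
    by simp
qed simp_all

lemma proj2_dsum: "proj2 C (cd a) (cd b) \<cdot> dsum C a b = b \<cdot> proj2 C (dm a) (dm b)"
proof (rule cop_ext[of _ "dm a" "dm b"])
  have "proj2 C (cd a) (cd b) \<cdot> dsum C a b \<cdot> inj2 C (dm a) (dm b) = proj2 C (cd a) (cd b) \<cdot> (dsum C a b \<cdot> inj2 C (dm a) (dm b))"
    by simp
  also have "\<dots> = b" by simp
  also have "\<dots> = b \<cdot> (proj2 C (dm a) (dm b) \<cdot> inj2 C (dm a) (dm b))" by simp
  finally show "proj2 C (cd a) (cd b) \<cdot> dsum C a b \<cdot> inj2 C (dm a) (dm b) = b \<cdot> proj2 C (dm a) (dm b) \<cdot> inj2 C (dm a) (dm b)"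
    by simp
  have "proj2 C (cd a) (cd b) \<cdot> dsum C a b \<cdot> inj1 C (dm a) (dm b) = proj2 C (cd a) (cd b) \<cdot> (dsum C a b \<cdot> inj1 C (dm a) (dm b))"
    by simp
  also have "\<dots> = zero_hom C (dm a) (cd b)" by (simp add: zh_comp_r)
  also have "\<dots> = b \<cdot> (proj2 C (dm a) (dm b) \<cdot> inj1 C (dm a) (dm b))" by (simp add: zh_comp_l)
  finally show "proj2 C (cd a) (cd b) \<cdot> dsum C a b \<cdot> inj1 C (dm a) (dm b) = b \<cdot> proj2 C (dm a) (dm b) \<cdot> inj1 C (dm a) (dm b)"
    by simp
qed simp_all

lemma P_typ[simp]: "dm (Pmor C f) = Pob C (cd f)" "cd (Pmor C f) = Pob C (dm f)"
  using ed unfolding exact_duality_def hom_def by blast+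
lemma P_comp: "cd f = dm g \<Longrightarrow> Pmor C (g \<cdot> f) = Pmor C f \<cdot> Pmor C g"
  using ed unfolding exact_duality_def by blast
lemma P_id[simp]: "Pmor C (idt C X) = idt C (Pob C X)"
  using ed unfolding exact_duality_def by blast
lemma infl_P: "infl C f \<longleftrightarrow> defl C (Pmor C f)"
  using ed unfolding exact_duality_def by blast

lemma can_typ[simp]: "dm (can C X Y) = cop C (Pob C X) (Pob C Y)" "cd (can C X Y) = Pob C (cop C X Y)"
  unfolding can_def by simp_all
lemma can_inj[simp]: "can C X Y \<cdot> inj1 C (Pob C X) (Pob C Y) = Pmor C (proj1 C X Y)"
   "can C X Y \<cdot> inj2 C (Pob C X) (Pob C Y) = Pmor C (proj2 C X Y)"
  unfolding can_def by simp_all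

lemmas can_inj_pre[simp] = pre[OF can_inj(1)] pre[OF can_inj(2)]
lemmas proj_dsum_pre = pre[OF proj1_dsum] pre[OF proj2_dsum]

lemma iso_inv: "iso C f \<Longrightarrow> \<exists>g. dm g = cd f \<and> cd g = dm f \<and> g \<cdot> f = idt C (dm f) \<and> f \<cdot> g = idt C (cd f)"
  unfolding iso_def hom_def by blast
lemma iso_infl: "iso C f \<Longrightarrow> infl C f" and iso_defl: "iso C f \<Longrightarrow> defl C f"
  using pe unfolding proto_exact_def by blast+
lemma infl_comp: "cd f = dm g \<Longrightarrow> infl C f \<Longrightarrow> infl C g \<Longrightarrow> infl C (g \<cdot> f)"
  using pe unfolding proto_exact_def by blast
lemma defl_comp: "cd f = dm g \<Longrightarrow> defl C f \<Longrightarrow> defl C g \<Longrightarrow> defl C (g \<cdot> f)"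
  using pe unfolding proto_exact_def by blast
lemma iso_intro: "dm g = cd f \<Longrightarrow> cd g = dm f \<Longrightarrow> g \<cdot> f = idt C (dm f) \<Longrightarrow> f \<cdot> g = idt C (cd f) \<Longrightarrow> iso C f"
  unfolding iso_def hom_def by blast

lemma iso_dsum:
  assumes "iso C a" "iso C b" shows "iso C (dsum C a b)"
proof -
  obtain a' where a': "dm a' = cd a" "cd a' = dm a" "a' \<cdot> a = idt C (dm a)" "a \<cdot> a' = idt C (cd a)"
    using iso_inv[OF assms(1)] by blast
  obtain b' where b': "dm b' = cd b" "cd b' = dm b" "b' \<cdot> b = idt C (dm b)" "b \<cdot> b' = idt C (cd b)"
    using iso_inv[OF assms(2)] by blast
  show ?thesis
  proof (rule iso_intro[of "dsum C a' b'"])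
    have "dsum C a' b' \<cdot> dsum C a b = dsum C (a' \<cdot> a) (b' \<cdot> b)" using a' b' dsum_comp[of a a' b b'] by simp
    then show "dsum C a' b' \<cdot> dsum C a b = idt C (dm (dsum C a b))" using a' b' by (simp add: dsum_id)
    have "dsum C a b \<cdot> dsum C a' b' = dsum C (a \<cdot> a') (b \<cdot> b')" using a' b' dsum_comp[of a' a b' b] by simp
    then show "dsum C a b \<cdot> dsum C a' b' = idt C (cd (dsum C a b))" using a' b' by (simp add: dsum_id)
  qed (use a' b' in simp_all)
qed


lemma ker_zero: "is_kernel C h k \<Longrightarrow> zero_mor C (h \<cdot> k)" and ker_cod: "is_kernel C h k \<Longrightarrow> cd k = dm h"
  unfolding is_kernel_def by blast+

lemma ker_univ: "is_kernel C h k \<Longrightarrow> cd g = dm h \<Longrightarrow> zero_mor C (h \<cdot> g) \<Longrightarrow>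
   \<exists>!t. hom C t (dm g) (dm k) \<and> k \<cdot> t = g"
  unfolding is_kernel_def by blast

lemma ker_mono:
  assumes k: "is_kernel C h k" and ab: "cd a = dm k" "cd b = dm k" "dm a = dm b" "k \<cdot> a = k \<cdot> b"
  shows "a = b"
proof -
  have kc: "cd k = dm h" using k ker_cod by blast
  have "zero_mor C (h \<cdot> k \<cdot> a)" using zm_comp_r[OF ker_zero[OF k]] ab kc by simp
  then have z: "zero_mor C (h \<cdot> (k \<cdot> a))" using ab(1) kc by simp
  have "\<exists>!t. hom C t (dm (k \<cdot> a)) (dm k) \<and> k \<cdot> t = k \<cdot> a"
    using ker_univ[OF k _ z] ab kc by simp
  moreover have "hom C a (dm (k \<cdot> a)) (dm k) \<and> k \<cdot> a = k \<cdot> a" using ab(1) kc unfolding hom_def by simp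
  moreover have "hom C b (dm (k \<cdot> a)) (dm k) \<and> k \<cdot> b = k \<cdot> a" using ab kc unfolding hom_def by simp
  ultimately show ?thesis by blast
qed

lemma ker_defl_ex:
  assumes dh: "defl C h"
  shows "\<exists>k0. is_kernel C h k0 \<and> infl C k0"
proof -
  define e0 where "e0 = fromz (cd h)"
  have e0: "dm e0 = z" "cd e0 = cd h" unfolding e0_def using fromz by simp_all
  have "\<forall>X f. hom C f z X \<longrightarrow> infl C f" using pe unfolding proto_exact_def by blast
  then have ie0: "infl C e0" using e0 unfolding hom_def by blast
  have "\<forall>d' i'. infl C i' \<and> defl C d' \<and> ccod C i' = ccod C d' \<longrightarrow>
        (\<exists>i d. adm_sq C i d d' i' \<and> bicart C i d d' i')" using pe unfolding proto_exact_def by blast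
  then obtain i0 d0 where sq: "adm_sq C i0 d0 h e0" "bicart C i0 d0 h e0"
    using ie0 dh e0 by blast
  have cs: "dm d0 = dm i0" "cd i0 = dm h" "cd d0 = z" "h \<cdot> i0 = e0 \<cdot> d0"
    using sq e0 unfolding adm_sq_def comm_sq_def by auto
  have pb: "\<forall>a b. cdom C a = cdom C b \<and> ccod C a = cdom C e0 \<and> ccod C b = cdom C h \<and>
        cmp C e0 a = cmp C h b \<longrightarrow>
        (\<exists>!t. hom C t (cdom C a) (cdom C i0) \<and> cmp C d0 t = a \<and> cmp C i0 t = b)"
    using sq unfolding bicart_def pullback_def by blast
  have "is_kernel C h i0"
    unfolding is_kernel_def
  proof (intro conjI allI impI)
    show "cd i0 = dm h" by (fact cs(2))
    show "zero_mor C (h \<cdot> i0)" unfolding zero_mor_def hom_def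
      using cs e0 by (intro exI[of _ d0] exI[of _ e0]) simp
  next
    fix g assume g: "cd g = dm h \<and> zero_mor C (h \<cdot> g)"
    then obtain a b where ab: "hom C a (dm (h \<cdot> g)) z" "hom C b z (cd (h \<cdot> g))" "h \<cdot> g = b \<cdot> a"
      unfolding zero_mor_def by (elim exE conjE) (rule that)
    have b: "b = e0" using ab(2) e0 g unfolding hom_def by (intro from_z_unique) simp_all
    have a: "dm a = dm g" "cd a = z" using ab(1) g unfolding hom_def by simp_all
    have ex: "\<exists>!t. hom C t (dm a) (dm i0) \<and> d0 \<cdot> t = a \<and> i0 \<cdot> t = g"
      using pb a g ab(3) b e0 by simp
    then obtain t where t: "hom C t (dm a) (dm i0)" "d0 \<cdot> t = a" "i0 \<cdot> t = g" by blast
    show "\<exists>!t. hom C t (dm g) (dm i0) \<and> i0 \<cdot> t = g"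
    proof (rule ex1I[of _ t])
      show "hom C t (dm g) (dm i0) \<and> i0 \<cdot> t = g" using t a by simp
    next
      fix t' assume t': "hom C t' (dm g) (dm i0) \<and> i0 \<cdot> t' = g"
      have "d0 \<cdot> t' = a" using t' a cs unfolding hom_def by (intro to_z_unique) simp_all
      then show "t' = t" using ex t t' a by auto
    qed
  qed
  moreover have "infl C i0" using sq unfolding adm_sq_def by blast
  ultimately show ?thesis by blast
qed

lemma ker_infl:
  assumes dh: "defl C h" and k: "is_kernel C h k"
  shows "infl C k"
proof -
  obtain k0 where k0: "is_kernel C h k0" "infl C k0" using ker_defl_ex[OF dh] by blast
  have kc: "cd k = dm h" "cd k0 = dm h" using k k0 ker_cod by blast+
  obtain s where s: "hom C s (dm k) (dm k0)" "k0 \<cdot> s = k"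
    using ker_univ[OF k0(1) kc(1) ker_zero[OF k]] by blast
  obtain s' where s': "hom C s' (dm k0) (dm k)" "k \<cdot> s' = k0"
    using ker_univ[OF k kc(2) ker_zero[OF k0(1)]] by blast
  have st: "dm s = dm k" "cd s = dm k0" "dm s' = dm k0" "cd s' = dm k" using s s' unfolding hom_def by auto
  have "k \<cdot> (s' \<cdot> s) = k \<cdot> idt C (dm k)"
  proof -
    have "k \<cdot> (s' \<cdot> s) = k \<cdot> s' \<cdot> s" using st by simp
    also have "\<dots> = k" using s s' by simp
    finally show ?thesis by simp
  qed
  then have 1: "s' \<cdot> s = idt C (dm s)" using ker_mono[OF k] st by simp
  have "k0 \<cdot> (s \<cdot> s') = k0 \<cdot> idt C (dm k0)"
  proof -
    have "k0 \<cdot> (s \<cdot> s') = k0 \<cdot> s \<cdot> s'" using st by simp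
    also have "\<dots> = k0" using s s' by simp
    finally show ?thesis by simp
  qed
  then have 2: "s \<cdot> s' = idt C (cd s)" using ker_mono[OF k0(1)] st by simp
  have "iso C s" using iso_intro[OF _ _ 1 2] st by simp
  then have "infl C (k0 \<cdot> s)" using infl_comp iso_infl k0 st by simp
  then show ?thesis using s by simp
qed


lemma side:
  assumes ker: "is_kernel C h k"
    and ty: "dm h = M" "dm e = M1" "cd e = M" "dm p = M" "cd p = M1"
       "dm h1 = M1" "cd h1 = Q1" "dm A = Q1" "cd A = cd h" "dm B = cd h" "cd B = Q1"
       "dm k1 = K1" "cd k1 = M1" "dm c = K1" "cd c = dm k" "dm q = dm k" "cd q = K1"
    and pe: "p \<cdot> e = idt C M1" and BA: "B \<cdot> A = idt C Q1" and heA: "h \<cdot> e = A \<cdot> h1"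
    and kc: "k \<cdot> c = e \<cdot> k1" and k1q: "k1 \<cdot> q = p \<cdot> k" and qc: "q \<cdot> c = idt C K1"
  shows "is_kernel C h1 k1"
proof -
  have kcod: "cd k = M" using ker ker_cod ty by metis
  note ty[simp] kcod[simp]
  have z0: "zero_mor C (h \<cdot> k)" using ker_zero[OF ker] .
  have "h1 \<cdot> k1 = B \<cdot> A \<cdot> h1 \<cdot> k1" using BA by simp
  also have "\<dots> = B \<cdot> (h \<cdot> e) \<cdot> k1" using heA by simp
  also have "\<dots> = B \<cdot> h \<cdot> (e \<cdot> k1)" by simp
  also have "\<dots> = B \<cdot> (h \<cdot> k) \<cdot> c" using kc[symmetric] by simp
  finally have e1: "h1 \<cdot> k1 = B \<cdot> (h \<cdot> k) \<cdot> c" .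
  have "zero_mor C (B \<cdot> (h \<cdot> k) \<cdot> c)"
    by (rule zm_comp_r[OF zm_comp_l[OF z0]]) simp_all
  then have zk: "zero_mor C (h1 \<cdot> k1)" using e1 by simp
  show ?thesis unfolding is_kernel_def
  proof (intro conjI allI impI)
    show "cd k1 = dm h1" by simp
    show "zero_mor C (h1 \<cdot> k1)" by (fact zk)
  next
    fix g assume g: "cd g = dm h1 \<and> zero_mor C (h1 \<cdot> g)"
    have gc: "cd g = M1" using g by simp
    have "h \<cdot> (e \<cdot> g) = A \<cdot> (h1 \<cdot> g)"
    proof -
      have "h \<cdot> (e \<cdot> g) = h \<cdot> e \<cdot> g" using gc by simp
      also have "\<dots> = A \<cdot> h1 \<cdot> g" using heA by simp
      finally show ?thesis using gc by simp
    qed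
    moreover have "zero_mor C (A \<cdot> (h1 \<cdot> g))" by (rule zm_comp_l) (use g gc in simp_all)
    ultimately have z: "zero_mor C (h \<cdot> (e \<cdot> g))" by simp
    have "\<exists>!t. hom C t (dm (e \<cdot> g)) (dm k) \<and> k \<cdot> t = e \<cdot> g"
      using ker_univ[OF ker _ z] gc by simp
    then obtain t' where t': "dm t' = dm g" "cd t' = dm k" "k \<cdot> t' = e \<cdot> g"
      using gc unfolding hom_def by auto
    show "\<exists>!t. hom C t (dm g) (dm k1) \<and> k1 \<cdot> t = g"
    proof (rule ex1I[of _ "q \<cdot> t'"])
      have "k1 \<cdot> (q \<cdot> t') = k1 \<cdot> q \<cdot> t'" using t' by simp
      also have "\<dots> = p \<cdot> k \<cdot> t'" using k1q by simp
      also have "\<dots> = p \<cdot> (k \<cdot> t')" using t'(1,2) by simp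
      also have "\<dots> = p \<cdot> (e \<cdot> g)" by (simp only: t'(3))
      also have "\<dots> = p \<cdot> e \<cdot> g" using gc by simp
      also have "\<dots> = g" using pe gc by simp
      finally show "hom C (q \<cdot> t') (dm g) (dm k1) \<and> k1 \<cdot> (q \<cdot> t') = g"
        using t' unfolding hom_def by simp
    next
      fix t2 assume t2: "hom C t2 (dm g) (dm k1) \<and> k1 \<cdot> t2 = g"
      have t2t: "dm t2 = dm g" "cd t2 = K1" using t2 unfolding hom_def by auto
      have "k \<cdot> (c \<cdot> t2) = k \<cdot> c \<cdot> t2" using t2t by simp
      also have "\<dots> = e \<cdot> k1 \<cdot> t2" using kc by simp
      also have "\<dots> = e \<cdot> (k1 \<cdot> t2)" using t2t by simp
      also have "\<dots> = e \<cdot> g" using t2 by simp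
      finally have "k \<cdot> (c \<cdot> t2) = k \<cdot> t'" using t' by simp
      then have "c \<cdot> t2 = t'" using ker_mono[OF ker] t2t t' by simp
      then have "q \<cdot> (c \<cdot> t2) = q \<cdot> t'" by simp
      moreover have "q \<cdot> (c \<cdot> t2) = t2" using t2t qc by simp
      ultimately show "t2 = q \<cdot> t'" by simp
    qed
  qed
qed


lemma proj_dsum'[simp]: "cd a = X \<Longrightarrow> cd b = Y \<Longrightarrow> proj1 C X Y \<cdot> dsum C a b = a \<cdot> proj1 C (dm a) (dm b)"
  "cd a = X \<Longrightarrow> cd b = Y \<Longrightarrow> proj2 C X Y \<cdot> dsum C a b = b \<cdot> proj2 C (dm a) (dm b)"
  using proj1_dsum proj2_dsum by blast+

lemma main:
  assumes ad: "additive_duality C" and s1: "sym_form C M1 \<psi>1" and s2: "sym_form C M2 \<psi>2"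
   and isoi: "isotropic C (cop C M1 M2) (sum_form C M1 M2 \<psi>1 \<psi>2) i"
  shows "\<exists>i1 i2 f. isotropic C M1 \<psi>1 i1 \<and> isotropic C M2 \<psi>2 i2 \<and>
           hom C f (cdom C i) (cop C (cdom C i1) (cdom C i2)) \<and> iso C f \<and>
           cmp C (dsum C i1 i2) f = i"
proof -
  have p1: "dm \<psi>1 = M1" "cd \<psi>1 = Pob C M1" "iso C \<psi>1" using s1 unfolding sym_form_def hom_def by auto
  have p2: "dm \<psi>2 = M2" "cd \<psi>2 = Pob C M2" "iso C \<psi>2" using s2 unfolding sym_form_def hom_def by auto
  note p1[simp] p2[simp]
  define \<psi> where "\<psi> = sum_form C M1 M2 \<psi>1 \<psi>2"
  have psi: "\<psi> = can C M1 M2 \<cdot> dsum C \<psi>1 \<psi>2" unfolding \<psi>_def sum_form_def ..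
  have psit[simp]: "dm \<psi> = cop C M1 M2" "cd \<psi> = Pob C (cop C M1 M2)" unfolding psi by simp_all
  have dpsi: "defl C \<psi>" unfolding psi
    using defl_comp iso_defl iso_dsum ad p1 p2 unfolding additive_duality_def by simp
  obtain k u where it: "infl C i" "cd i = cop C M1 M2" "is_kernel C (Pmor C i \<cdot> \<psi>) k"
      "dm u = dm i" "cd u = dm k" "k \<cdot> u = i" "infl C u"
    using isoi unfolding isotropic_def \<psi>_def hom_def by blast
  note it(2,4,5)[simp]
  define h where "h = Pmor C i \<cdot> \<psi>"
  have ht[simp]: "dm h = cop C M1 M2" "cd h = Pob C (dm i)" unfolding h_def by simp_all
  have dh: "defl C h" unfolding h_def using defl_comp dpsi infl_P it(1) by simp
  have ker: "is_kernel C h k" using it(3) unfolding h_def .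
  have ik: "infl C k" using ker_infl[OF dh ker] .
  have kcod[simp]: "cd k = cop C M1 M2" using ker ker_cod ht by metis
  have comb: "\<forall>j X1 X2. infl C j \<and> ccod C j = cop C X1 X2 \<longrightarrow>
        (\<exists>j1 j2 f. infl C j1 \<and> infl C j2 \<and> ccod C j1 = X1 \<and> ccod C j2 = X2 \<and>
           hom C f (cdom C j) (cop C (cdom C j1) (cdom C j2)) \<and> iso C f \<and>
           cmp C (dsum C j1 j2) f = j)" using cb unfolding combinatorial_def by blast
  obtain k1 k2 g where kk: "infl C k1" "infl C k2" "cd k1 = M1" "cd k2 = M2"
    "dm g = dm k" "cd g = cop C (dm k1) (dm k2)" "iso C g" "dsum C k1 k2 \<cdot> g = k"
    using comb[rule_format, of k M1 M2] ik unfolding hom_def by auto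
  note kk(3-6)[simp]
  obtain gi where gi[simp]: "dm gi = cd g" "cd gi = dm g" "gi \<cdot> g = idt C (dm g)" "g \<cdot> gi = idt C (cd g)"
    using iso_inv[OF kk(7)] by blast
  have gi_pre[simp]: "x \<cdot> g \<cdot> gi = x" if "dm x = cd g" for x
  proof -
    have "x \<cdot> g \<cdot> gi = x \<cdot> (g \<cdot> gi)" by (rule assoc[symmetric]) (use that in simp_all)
    also have "\<dots> = x" using that by (simp only: gi(4)) simp
    finally show ?thesis .
  qed
  have igu: "infl C (g \<cdot> u)" using infl_comp[of u g] it kk iso_infl by simp
  obtain v1 v2 f where vv: "infl C v1" "infl C v2" "cd v1 = dm k1" "cd v2 = dm k2"
    "dm f = dm i" "cd f = cop C (dm v1) (dm v2)" "iso C f" "dsum C v1 v2 \<cdot> f = g \<cdot> u"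
    using comb[rule_format, of "g \<cdot> u" "dm k1" "dm k2"] igu unfolding hom_def by auto
  note vv(3-6)[simp]
  obtain fi where fi[simp]: "dm fi = cd f" "cd fi = dm f" "fi \<cdot> f = idt C (dm f)" "f \<cdot> fi = idt C (cd f)"
    using iso_inv[OF vv(7)] by blast
  define i1 where "i1 = k1 \<cdot> v1"
  define i2 where "i2 = k2 \<cdot> v2"
  have i12[simp]: "dm i1 = dm v1" "cd i1 = M1" "dm i2 = dm v2" "cd i2 = M2"
    unfolding i1_def i2_def by simp_all
  have eq: "dsum C i1 i2 \<cdot> f = i"
  proof -
    have "dsum C i1 i2 \<cdot> f = dsum C k1 k2 \<cdot> dsum C v1 v2 \<cdot> f"
      unfolding i1_def i2_def by (simp add: dsum_comp)
    also have "\<dots> = dsum C k1 k2 \<cdot> (dsum C v1 v2 \<cdot> f)" by simp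
    also have "\<dots> = dsum C k1 k2 \<cdot> (g \<cdot> u)" by (simp only: vv(8))
    also have "\<dots> = dsum C k1 k2 \<cdot> g \<cdot> u" by simp
    also have "\<dots> = i" using kk(8) it(6) by simp
    finally show ?thesis .
  qed
  have kgi: "k \<cdot> gi = dsum C k1 k2"
  proof -
    have "dsum C k1 k2 = dsum C k1 k2 \<cdot> (g \<cdot> gi)" by (simp only: gi(4)) simp
    also have "\<dots> = dsum C k1 k2 \<cdot> g \<cdot> gi" by (rule assoc) simp_all
    also have "\<dots> = k \<cdot> gi" by (simp only: kk(8))
    finally show ?thesis by simp
  qed
  have PfPfi: "Pmor C fi \<cdot> Pmor C f = idt C (Pob C (cd f))"
  proof -
    have "Pmor C fi \<cdot> Pmor C f = Pmor C (f \<cdot> fi)" by (rule P_comp[symmetric]) simp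
    also have "\<dots> = idt C (Pob C (cd f))" by simp
    finally show ?thesis .
  qed
  have side1: "isotropic C M1 \<psi>1 i1"
  proof -
    define A where "A = Pmor C f \<cdot> Pmor C (proj1 C (dm v1) (dm v2))"
    define B where "B = Pmor C (inj1 C (dm v1) (dm v2)) \<cdot> Pmor C fi"
    define c where "c = gi \<cdot> inj1 C (dm k1) (dm k2)"
    define q where "q = proj1 C (dm k1) (dm k2) \<cdot> g"
    have BA: "B \<cdot> A = idt C (Pob C (dm v1))"
    proof -
      have "B \<cdot> A = Pmor C (inj1 C (dm v1) (dm v2)) \<cdot> (Pmor C fi \<cdot> Pmor C f) \<cdot> Pmor C (proj1 C (dm v1) (dm v2))"
        unfolding A_def B_def by simp
      also have "\<dots> = Pmor C (inj1 C (dm v1) (dm v2)) \<cdot> Pmor C (proj1 C (dm v1) (dm v2))"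
        by (simp add: PfPfi)
      also have "\<dots> = Pmor C (proj1 C (dm v1) (dm v2) \<cdot> inj1 C (dm v1) (dm v2))"
        by (rule P_comp[symmetric]) simp
      also have "\<dots> = idt C (Pob C (dm v1))" by simp
      finally show ?thesis .
    qed
    have heA: "h \<cdot> inj1 C M1 M2 = A \<cdot> (Pmor C i1 \<cdot> \<psi>1)"
    proof -
      have "h \<cdot> inj1 C M1 M2 = Pmor C i \<cdot> Pmor C (proj1 C M1 M2) \<cdot> \<psi>1"
        unfolding h_def psi by simp
      also have "\<dots> = Pmor C (proj1 C M1 M2 \<cdot> i) \<cdot> \<psi>1" by (simp add: P_comp)
      also have "\<dots> = Pmor C (proj1 C M1 M2 \<cdot> (dsum C i1 i2 \<cdot> f)) \<cdot> \<psi>1" by (simp only: eq)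
      also have "\<dots> = Pmor C (i1 \<cdot> proj1 C (dm v1) (dm v2) \<cdot> f) \<cdot> \<psi>1" by simp
      also have "\<dots> = A \<cdot> (Pmor C i1 \<cdot> \<psi>1)" unfolding A_def by (simp add: P_comp)
      finally show ?thesis .
    qed
    have kc: "k \<cdot> c = inj1 C M1 M2 \<cdot> k1"
    proof -
      have "k \<cdot> c = k \<cdot> gi \<cdot> inj1 C (dm k1) (dm k2)" unfolding c_def by simp
      also have "\<dots> = dsum C k1 k2 \<cdot> inj1 C (dm k1) (dm k2)" by (simp only: kgi)
      also have "\<dots> = inj1 C M1 M2 \<cdot> k1" by simp
      finally show ?thesis .
    qed
    have k1q: "k1 \<cdot> q = proj1 C M1 M2 \<cdot> k"
    proof -
      have "proj1 C M1 M2 \<cdot> k = proj1 C M1 M2 \<cdot> (dsum C k1 k2 \<cdot> g)" by (simp only: kk(8))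
      also have "\<dots> = k1 \<cdot> q" unfolding q_def by simp
      finally show ?thesis by simp
    qed
    have qc: "q \<cdot> c = idt C (dm k1)"
    proof -
      have "q \<cdot> c = proj1 C (dm k1) (dm k2) \<cdot> (g \<cdot> gi) \<cdot> inj1 C (dm k1) (dm k2)"
        unfolding q_def c_def by simp
      also have "\<dots> = idt C (dm k1)" by simp
      finally show ?thesis .
    qed
    have K: "is_kernel C (Pmor C i1 \<cdot> \<psi>1) k1"
      by (rule side[OF ker _ _ _ _ _ _ _ _ _ _ _ _ _ _ _ _ _ _ BA heA kc k1q qc])
        (simp_all add: A_def B_def c_def q_def)
    have "zero_mor C (Pmor C i1 \<cdot> \<psi>1 \<cdot> k1 \<cdot> v1)"
      by (rule zm_comp_r[OF ker_zero[OF K]]) simp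
    then have "zero_mor C (Pmor C i1 \<cdot> (\<psi>1 \<cdot> i1))" unfolding i1_def by simp
    then show ?thesis unfolding isotropic_def hom_def
      using K vv(1) kk(1) infl_comp[of v1 k1] unfolding i1_def by fastforce
  qed
  have side2: "isotropic C M2 \<psi>2 i2"
  proof -
    define A where "A = Pmor C f \<cdot> Pmor C (proj2 C (dm v1) (dm v2))"
    define B where "B = Pmor C (inj2 C (dm v1) (dm v2)) \<cdot> Pmor C fi"
    define c where "c = gi \<cdot> inj2 C (dm k1) (dm k2)"
    define q where "q = proj2 C (dm k1) (dm k2) \<cdot> g"
    have BA: "B \<cdot> A = idt C (Pob C (dm v2))"
    proof -
      have "B \<cdot> A = Pmor C (inj2 C (dm v1) (dm v2)) \<cdot> (Pmor C fi \<cdot> Pmor C f) \<cdot> Pmor C (proj2 C (dm v1) (dm v2))"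
        unfolding A_def B_def by simp
      also have "\<dots> = Pmor C (inj2 C (dm v1) (dm v2)) \<cdot> Pmor C (proj2 C (dm v1) (dm v2))"
        by (simp add: PfPfi)
      also have "\<dots> = Pmor C (proj2 C (dm v1) (dm v2) \<cdot> inj2 C (dm v1) (dm v2))"
        by (rule P_comp[symmetric]) simp
      also have "\<dots> = idt C (Pob C (dm v2))" by simp
      finally show ?thesis .
    qed
    have heA: "h \<cdot> inj2 C M1 M2 = A \<cdot> (Pmor C i2 \<cdot> \<psi>2)"
    proof -
      have "h \<cdot> inj2 C M1 M2 = Pmor C i \<cdot> Pmor C (proj2 C M1 M2) \<cdot> \<psi>2"
        unfolding h_def psi by simp
      also have "\<dots> = Pmor C (proj2 C M1 M2 \<cdot> i) \<cdot> \<psi>2" by (simp add: P_comp)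
      also have "\<dots> = Pmor C (proj2 C M1 M2 \<cdot> (dsum C i1 i2 \<cdot> f)) \<cdot> \<psi>2" by (simp only: eq)
      also have "\<dots> = Pmor C (i2 \<cdot> proj2 C (dm v1) (dm v2) \<cdot> f) \<cdot> \<psi>2" by simp
      also have "\<dots> = A \<cdot> (Pmor C i2 \<cdot> \<psi>2)" unfolding A_def by (simp add: P_comp)
      finally show ?thesis .
    qed
    have kc: "k \<cdot> c = inj2 C M1 M2 \<cdot> k2"
    proof -
      have "k \<cdot> c = k \<cdot> gi \<cdot> inj2 C (dm k1) (dm k2)" unfolding c_def by simp
      also have "\<dots> = dsum C k1 k2 \<cdot> inj2 C (dm k1) (dm k2)" by (simp only: kgi)
      also have "\<dots> = inj2 C M1 M2 \<cdot> k2" by simp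
      finally show ?thesis .
    qed
    have k2q: "k2 \<cdot> q = proj2 C M1 M2 \<cdot> k"
    proof -
      have "proj2 C M1 M2 \<cdot> k = proj2 C M1 M2 \<cdot> (dsum C k1 k2 \<cdot> g)" by (simp only: kk(8))
      also have "\<dots> = k2 \<cdot> q" unfolding q_def by simp
      finally show ?thesis by simp
    qed
    have qc: "q \<cdot> c = idt C (dm k2)"
    proof -
      have "q \<cdot> c = proj2 C (dm k1) (dm k2) \<cdot> (g \<cdot> gi) \<cdot> inj2 C (dm k1) (dm k2)"
        unfolding q_def c_def by simp
      also have "\<dots> = idt C (dm k2)" by simp
      finally show ?thesis .
    qed
    have K: "is_kernel C (Pmor C i2 \<cdot> \<psi>2) k2"
      by (rule side[OF ker _ _ _ _ _ _ _ _ _ _ _ _ _ _ _ _ _ _ BA heA kc k2q qc])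
        (simp_all add: A_def B_def c_def q_def)
    have "zero_mor C (Pmor C i2 \<cdot> \<psi>2 \<cdot> k2 \<cdot> v2)"
      by (rule zm_comp_r[OF ker_zero[OF K]]) simp
    then have "zero_mor C (Pmor C i2 \<cdot> (\<psi>2 \<cdot> i2))" unfolding i2_def by simp
    then show ?thesis unfolding isotropic_def hom_def
      using K vv(2) kk(2) infl_comp[of v2 k2] unfolding i2_def by fastforce
  qed
  show ?thesis
    using side1 side2 eq vv(5,7) unfolding hom_def by (intro exI[of _ i1] exI[of _ i2] exI[of _ f]) simp
qed

end

theorem lemma1p7:
  fixes C :: "('o, 'm) pecd"
  assumes "proto_exact C"
    and "exact_duality C"
    and "has_coproducts C"
    and "additive_duality C"
    and "combinatorial C"
    and "sym_form C M1 \<psi>1"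
    and "sym_form C M2 \<psi>2"
    and "isotropic C (cop C M1 M2) (sum_form C M1 M2 \<psi>1 \<psi>2) i"
  shows "\<exists>i1 i2 f. isotropic C M1 \<psi>1 i1 \<and> isotropic C M2 \<psi>2 i2 \<and>
           hom C f (cdom C i) (cop C (cdom C i1) (cdom C i2)) \<and> iso C f \<and>
           cmp C (dsum C i1 i2) f = i"
proof -
  interpret pctx C using assms(1,2,3,5) by unfold_locales
  show ?thesis by (rule main[OF assms(4,6,7,8)])
qed

end
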